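(* Assume the standing setting below and fix $\rho>0$. For any $\zeta=(\zeta_1,\dots,\zeta_L)\in\mathsf Z$, writing $\bar\zeta_\ell=\frac1{|A_\ell|}\sum_{v\in A_\ell}\zeta_\ell(v)$: (i) there exists a unique pair $(\lambda,z)\in\mathsf Z\times\mathsf Z$ with $z\in\partial g^*(\lambda)$ and $\lambda+\rho z=\zeta$; (ii) $J_{\rho U}(\zeta)=\lambda$; (iii) for each $\ell$, $\lambda_\ell=\zeta_\ell-\bar\zeta_\ell 1_{A_\ell}$ and $z_\ell=\frac{\bar\zeta_\ell}{\rho}1_{A_\ell}$; write $\bar z_\ell=\bar\zeta_\ell/\rho$ for the constant value of $z_\ell$; (iv) for each $\ell$ and each $v\in A_\ell$, the $\ell$-th block of $S=J_R$ is $S_\ell(\zeta)(v)=\lambda_\ell(v)+\rho\,x(v)$, where for every $v\in V$ $$x(v)=\mathrm{prox}_{f_v,\rho|\sigma(v)|}\Big(\frac1{|\sigma(v)|}\sum_{m\in\sigma(v)}\Big(\bar z_m-\frac{\lambda_m(v)}{\rho}\Big)\Big).$$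
   Context: $V$ finite set, $\mathsf X$ Euclidean space, $f_v:\mathsf X\to(-\infty,+\infty]$ proper closed convex for each $v\in V$, and $\inf_{y\in\mathsf X}\sum_v f_v(y)$ is finite and attained. $A_1,\dots,A_L\subset V$ with $\bigcup_\ell A_\ell=V$ and $\bigcup_\ell G(A_\ell)$ connected (for a graph $G=(V,E)$; $G(A)$ = induced subgraph). $\mathsf X^A$: functions $A\to\mathsf X$ with inner product $\sum_{v\in A}\langle x(v),y(v)\rangle$; $1_A$ constant one; $\mathrm{sp}(1_A)$ constants on $A$. $\mathsf Z=\mathsf X^{A_1}\times\cdots\times\mathsf X^{A_L}$ with the sum inner product. $f(x)=\sum_v f_v(x(v))$ on $\mathsf X^V$; $g(z)=\sum_\ell\iota_{\mathrm{sp}(1_{A_\ell})}(z_\ell)$ ($\iota_H$ = $0$ on $H$, $+\infty$ elsewhere); $M:\mathsf X^V\to\mathsf Z$, $Mx=(x|_{A_1},\dots,x|_{A_L})$, with adjoint $M^*$; $f^*,g^*$ Fenchel conjugates. $\sigma(v)=\{\ell:v\in A_\ell\}$. $\mathrm{prox}_{h,\rho}(x)=\arg\min_y h(y)+\frac\rho2\|y-x\|^2$. Operators on $\mathsf Z$ (set-valued, identified with graphs): $T(\nu)=\{-Mx: x\in\partial f^*(-M^*\nu)\}$ (the subdifferential of $\nu\mapsto f^*(-M^*\nu)$), $U=\partial g^*$. Resolvent $J_{\rho U}=(I+\rho U)^{-1}$. Douglas–Rachford operator $R=\{(\nu+\rho b,\ \mu-\nu): (\mu,b)\in U,\ (\nu,a)\in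 T,\ \nu+\rho a=\mu-\rho b\}$, and $S=J_R=(I+R)^{-1}$, which is single valued with domain $\mathsf Z$ and blocks $S(\zeta)=(S_1(\zeta),\dots,S_L(\zeta))$, $S_\ell(\zeta)\in\mathsf X^{A_\ell}$. *)

theory Defs
  imports "HOL-Analysis.Analysis" "HOL-Library.Function_Algebras"
begin

text \<open>An inner product space is given by a carrier set C (a linear subspace of a
function type) and an inner product ip on it.\<close>

definition proper_fun :: "('a \<Rightarrow> ereal) \<Rightarrow> bool" where
  "proper_fun h \<longleftrightarrow> (\<forall>x. h x \<noteq> -\<infinity>) \<and> (\<exists>x. h x \<noteq> \<infinity>)"

definition closed_fun :: "('a::topological_space \<Rightarrow> ereal) \<Rightarrow> bool" where
  "closed_fun h \<longleftrightarrow> closed {(x, r::real). h x \<le> ereal r}"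

definition convex_fun :: "('a::real_vector \<Rightarrow> ereal) \<Rightarrow> bool" where
  "convex_fun h \<longleftrightarrow> (\<forall>x y t. 0 \<le> t \<and> t \<le> 1 \<longrightarrow>
      h ((1 - t) *\<^sub>R x + t *\<^sub>R y) \<le> ereal (1 - t) * h x + ereal t * h y)"

definition fconj :: "'a set \<Rightarrow> ('a \<Rightarrow> 'a \<Rightarrow> real) \<Rightarrow> ('a \<Rightarrow> ereal) \<Rightarrow> 'a \<Rightarrow> ereal" where
  "fconj C ip h y = (SUP x\<in>C. ereal (ip y x) - h x)"

definition subdiff :: "'a set \<Rightarrow> ('a \<Rightarrow> 'a \<Rightarrow> real) \<Rightarrow> ('a::ab_group_add \<Rightarrow> ereal) \<Rightarrow> 'a \<Rightarrow> 'a set" where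
  "subdiff C ip h x = {y \<in> C. x \<in> C \<and> \<bar>h x\<bar> \<noteq> \<infinity> \<and>
      (\<forall>w\<in>C. h x + ereal (ip y (w - x)) \<le> h w)}"

definition prox :: "('x::euclidean_space \<Rightarrow> ereal) \<Rightarrow> real \<Rightarrow> 'x \<Rightarrow> 'x" where
  "prox h c x = arg_min (\<lambda>y. h y + ereal (c / 2 * (norm (y - x))\<^sup>2)) (\<lambda>_. True)"

text \<open>Elements of X^V are functions V -> X, extended by 0 outside V.\<close>
definition XV :: "'v set \<Rightarrow> ('v \<Rightarrow> 'x::euclidean_space) set" where
  "XV V = {x. \<forall>v. v \<notin> V \<longrightarrow> x v = 0}"

definition ipV :: "'v set \<Rightarrow> ('v \<Rightarrow> 'x::euclidean_space) \<Rightarrow> ('v \<Rightarrow> 'x) \<Rightarrow> real" where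
  "ipV V x y = (\<Sum>v\<in>V. x v \<bullet> y v)"

text \<open>Blocks are indexed by l < L; block l lives on A l; extended by 0 elsewhere.\<close>
definition ZS :: "nat \<Rightarrow> (nat \<Rightarrow> 'v set) \<Rightarrow> (nat \<Rightarrow> 'v \<Rightarrow> 'x::euclidean_space) set" where
  "ZS L A = {z. \<forall>l v. (L \<le> l \<or> v \<notin> A l) \<longrightarrow> z l v = 0}"

definition ipZ :: "nat \<Rightarrow> (nat \<Rightarrow> 'v set) \<Rightarrow> (nat \<Rightarrow> 'v \<Rightarrow> 'x::euclidean_space)
    \<Rightarrow> (nat \<Rightarrow> 'v \<Rightarrow> 'x) \<Rightarrow> real" where
  "ipZ L A z w = (\<Sum>l<L. \<Sum>v\<in>A l. z l v \<bullet> w l v)"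

definition sigma_idx :: "nat \<Rightarrow> (nat \<Rightarrow> 'v set) \<Rightarrow> 'v \<Rightarrow> nat set" where
  "sigma_idx L A v = {l. l < L \<and> v \<in> A l}"

definition Mop :: "nat \<Rightarrow> (nat \<Rightarrow> 'v set) \<Rightarrow> ('v \<Rightarrow> 'x::euclidean_space) \<Rightarrow> (nat \<Rightarrow> 'v \<Rightarrow> 'x)" where
  "Mop L A x = (\<lambda>l v. if l < L \<and> v \<in> A l then x v else 0)"

definition Madj :: "'v set \<Rightarrow> nat \<Rightarrow> (nat \<Rightarrow> 'v set) \<Rightarrow> (nat \<Rightarrow> 'v \<Rightarrow> 'x::euclidean_space) \<Rightarrow> ('v \<Rightarrow> 'x)" where
  "Madj V L A w = (\<lambda>v. if v \<in> V then (\<Sum>l\<in>sigma_idx L A v. w l v) else 0)"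

definition fsum :: "'v set \<Rightarrow> ('v \<Rightarrow> 'x::euclidean_space \<Rightarrow> ereal) \<Rightarrow> ('v \<Rightarrow> 'x) \<Rightarrow> ereal" where
  "fsum V fv x = (\<Sum>v\<in>V. fv v (x v))"

text \<open>g(z) = sum of indicators of sp(1_{A_l}).\<close>
definition gfun :: "nat \<Rightarrow> (nat \<Rightarrow> 'v set) \<Rightarrow> (nat \<Rightarrow> 'v \<Rightarrow> 'x::euclidean_space) \<Rightarrow> ereal" where
  "gfun L A z = (\<Sum>l<L. if (\<exists>c. \<forall>v\<in>A l. z l v = c) then 0 else \<infinity>)"

definition Top :: "'v set \<Rightarrow> nat \<Rightarrow> (nat \<Rightarrow> 'v set) \<Rightarrow> ('v \<Rightarrow> 'x::euclidean_space \<Rightarrow> ereal)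
    \<Rightarrow> ((nat \<Rightarrow> 'v \<Rightarrow> 'x) \<times> (nat \<Rightarrow> 'v \<Rightarrow> 'x)) set" where
  "Top V L A fv = {(\<nu>, - Mop L A x) | \<nu> x. \<nu> \<in> ZS L A \<and>
      x \<in> subdiff (XV V) (ipV V) (fconj (XV V) (ipV V) (fsum V fv)) (- Madj V L A \<nu>)}"

definition Uop :: "nat \<Rightarrow> (nat \<Rightarrow> 'v set) \<Rightarrow> ((nat \<Rightarrow> 'v \<Rightarrow> 'x::euclidean_space) \<times> (nat \<Rightarrow> 'v \<Rightarrow> 'x)) set" where
  "Uop L A = {(lam, z). lam \<in> ZS L A \<and>
      z \<in> subdiff (ZS L A) (ipZ L A) (fconj (ZS L A) (ipZ L A) (gfun L A)) lam}"

text \<open>Resolvent (I + c Op)^{-1} as a graph.\<close>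
definition resolventZ :: "real \<Rightarrow> ((nat \<Rightarrow> 'v \<Rightarrow> 'x::euclidean_space) \<times> (nat \<Rightarrow> 'v \<Rightarrow> 'x)) set
    \<Rightarrow> ((nat \<Rightarrow> 'v \<Rightarrow> 'x) \<times> (nat \<Rightarrow> 'v \<Rightarrow> 'x)) set" where
  "resolventZ c Op = {((\<lambda>l v. x l v + c *\<^sub>R y l v), x) | x y. (x, y) \<in> Op}"

definition DRop :: "real \<Rightarrow> ((nat \<Rightarrow> 'v \<Rightarrow> 'x::euclidean_space) \<times> (nat \<Rightarrow> 'v \<Rightarrow> 'x)) set
    \<Rightarrow> ((nat \<Rightarrow> 'v \<Rightarrow> 'x) \<times> (nat \<Rightarrow> 'v \<Rightarrow> 'x)) set
    \<Rightarrow> ((nat \<Rightarrow> 'v \<Rightarrow> 'x) \<times> (nat \<Rightarrow> 'v \<Rightarrow> 'x)) set" where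
  "DRop \<rho> T U = {((\<lambda>l v. \<nu> l v + \<rho> *\<^sub>R b l v), (\<lambda>l v. \<mu> l v - \<nu> l v)) | \<mu> b \<nu> a.
      (\<mu>, b) \<in> U \<and> (\<nu>, a) \<in> T \<and>
      (\<lambda>l v. \<nu> l v + \<rho> *\<^sub>R a l v) = (\<lambda>l v. \<mu> l v - \<rho> *\<^sub>R b l v)}"

definition union_induced_edges :: "('v \<times> 'v) set \<Rightarrow> nat \<Rightarrow> (nat \<Rightarrow> 'v set) \<Rightarrow> ('v \<times> 'v) set" where
  "union_induced_edges E L A = {(a, b) \<in> E. \<exists>l<L. a \<in> A l \<and> b \<in> A l}"

definition connected_graph :: "'v set \<Rightarrow> ('v \<times> 'v) set \<Rightarrow> bool" where
  "connected_graph W F \<longleftrightarrow> (\<forall>u\<in>W. \<forall>w\<in>W. (u, w) \<in> (F \<union> F\<inverse>)\<^sup>*)"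

end

theory Submission
  imports Defs
begin

lemma lsc_min_compact:
  fixes h :: "'a::metric_space \<Rightarrow> ereal"
  assumes K: "compact K" "K \<noteq> {}" and cl: "\<And>r. closed {y. h y \<le> ereal r}"
  shows "\<exists>y\<in>K. \<forall>z\<in>K. h y \<le> h z"
proof -
  define m where "m = (INF z\<in>K. h z)"
  define T where "T = {t::real. m < ereal t}"
  have "K \<inter> (\<Inter>t\<in>T. {y. h y \<le> ereal t}) \<noteq> {}"
  proof (rule compact_imp_fip_image[OF K(1)])
    fix t show "closed {y. h y \<le> ereal t}" by (rule cl)
  next
    fix I' assume fI: "finite I'" and sub: "I' \<subseteq> T"
    show "K \<inter> (\<Inter>t\<in>I'. {y. h y \<le> ereal t}) \<noteq> {}"
    proof (cases "I' = {}")
      case True then show ?thesis using K(2) by simp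
    next
      case False
      define t0 where "t0 = Min I'"
      have t0: "t0 \<in> I'" using fI False by (simp add: t0_def)
      have "m < ereal t0" using t0 sub T_def by auto
      then obtain z where z: "z \<in> K" "h z < ereal t0" unfolding m_def INF_less_iff by blast
      have "z \<in> K \<inter> (\<Inter>t\<in>I'. {y. h y \<le> ereal t})"
      proof -
        { fix t assume "t \<in> I'"
          then have "t0 \<le> t" using fI t0_def by simp
          then have "h z \<le> ereal t" using z by (meson ereal_less_eq(3) less_imp_le order_trans) }
        then show ?thesis using z by auto
      qed
      then show ?thesis by blast
    qed
  qed
  then obtain y where y: "y \<in> K" "\<And>t. t \<in> T \<Longrightarrow> h y \<le> ereal t" by blast
  have "h y \<le> m"
  proof (rule dense_ge)
    fix x assume "m < x"
    then show "h y \<le> x" using y(2) unfolding T_def by (cases x) auto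
  qed
  then show ?thesis using y(1) unfolding m_def by (meson INF_lower order_trans)
qed

lemma closed_sublevel_q:
  fixes f :: "'a::real_normed_vector \<Rightarrow> ereal"
  assumes "closed_fun f" and q: "continuous_on UNIV q"
  shows "closed {y. f y + ereal (q y) \<le> ereal r}"
proof -
  have "{y. f y + ereal (q y) \<le> ereal r} = (\<lambda>y. (y, r - q y)) -` {(x, r::real). f x \<le> ereal r}"
  proof (intro set_eqI iffI)
    fix y show "y \<in> {y. f y + ereal (q y) \<le> ereal r} \<Longrightarrow> y \<in> (\<lambda>y. (y, r - q y)) -` {(x, r). f x \<le> ereal r}"
      by (cases "f y") auto
    show "y \<in> (\<lambda>y. (y, r - q y)) -` {(x, r). f x \<le> ereal r} \<Longrightarrow> y \<in> {y. f y + ereal (q y) \<le> ereal r}"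
      by (cases "f y") auto
  qed
  moreover have "closed ((\<lambda>y. (y, r - q y)) -` {(x, r::real). f x \<le> ereal r})"
    apply (rule continuous_closed_vimage)
    using assms(1) unfolding closed_fun_def apply simp
    using q by (intro continuous_intros) (auto simp: continuous_on_eq_continuous_at)
  ultimately show ?thesis by simp
qed

lemma convex_lower_bound:
  fixes f :: "'a::euclidean_space \<Rightarrow> ereal"
  assumes pr: "proper_fun f" and cl: "closed_fun f" and cv: "convex_fun f"
  shows "\<exists>a k. k \<ge> 0 \<and> (\<forall>y. ereal (a - k * norm y) \<le> f y)"
proof -
  obtain y1 where y1: "f y1 \<noteq> \<infinity>" using pr unfolding proper_fun_def by blast
  have ninf: "\<And>x. f x \<noteq> -\<infinity>" using pr unfolding proper_fun_def by blast
  obtain F1 where F1: "f y1 = ereal F1" using y1 ninf[of y1] by (cases "f y1") auto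
  have clf: "\<And>r. closed {y. f y \<le> ereal r}"
    using closed_sublevel_q[OF cl, of "\<lambda>_. 0"] by simp
  obtain ys where ys: "ys \<in> cball y1 1" "\<And>z. z \<in> cball y1 1 \<Longrightarrow> f ys \<le> f z"
    using lsc_min_compact[of "cball y1 1" f, OF compact_cball _ clf] by auto
  have "f ys \<le> f y1" using ys by simp
  then obtain m where m: "f ys = ereal m" using F1 ninf[of ys] by (cases "f ys") auto
  have mF1: "m \<le> F1" using \<open>f ys \<le> f y1\<close> m F1 by simp
  define k where "k = F1 - m"
  have main: "ereal (m - k * norm (y - y1)) \<le> f y" for y
  proof (cases "norm (y - y1) \<le> 1")
    case True
    then have "ereal m \<le> f y" using ys(2)[of y] m by (simp add: dist_norm norm_minus_commute)
    moreover have "m - k * norm (y - y1) \<le> m" using mF1 k_def by simp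
    ultimately show ?thesis by (meson ereal_less_eq(3) order_trans)
  next
    case False
    define t where "t = norm (y - y1)"
    have t1: "t > 1" using False t_def by simp
    define d where "d = (1 - 1/t) *\<^sub>R y1 + (1/t) *\<^sub>R y"
    have "d - y1 = (1/t) *\<^sub>R (y - y1)" unfolding d_def by (simp add: algebra_simps)
    then have "norm (d - y1) = 1" using t1 t_def by (auto simp: divide_simps)
    then have "d \<in> cball y1 1" by (simp add: dist_norm norm_minus_commute)
    then have md: "ereal m \<le> f d" using ys(2) m by metis
    have "f d \<le> ereal (1 - 1/t) * f y1 + ereal (1/t) * f y"
      using cv t1 unfolding convex_fun_def d_def by (metis divide_le_eq_1 divide_nonneg_pos less_eq_real_def
          less_numeral_extra(1) less_trans zero_le_one)
    show ?thesis
    proof (cases "f y")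
      case (real Fy)
      have "m \<le> (1 - 1/t) * F1 + (1/t) * Fy" using order_trans[OF md \<open>f d \<le> _\<close>] F1 real by simp
      then have "t * m \<le> t * ((1 - 1/t) * F1 + (1/t) * Fy)" using t1 by simp
      also have "\<dots> = (t - 1) * F1 + Fy" using t1 by (simp add: algebra_simps)
      finally have "t * m \<le> (t - 1) * F1 + Fy" .
      then have "m - k * t \<le> Fy" unfolding k_def using mF1 t1 by (simp add: algebra_simps)
      then show ?thesis using real t_def by simp
    qed (use ninf in auto)
  qed
  show ?thesis
  proof (intro exI conjI allI)
    show "0 \<le> k" using mF1 k_def by simp
    fix y
    have "m - k * norm y1 - k * norm y \<le> m - k * norm (y - y1)"
    proof -
      have "norm (y - y1) \<le> norm y + norm y1" by (rule norm_triangle_ineq4)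
      then have "k * norm (y - y1) \<le> k * (norm y + norm y1)" using mF1 k_def by (simp add: mult_left_mono)
      then show ?thesis by (simp add: algebra_simps)
    qed
    then show "ereal (m - k * norm y1 - k * norm y) \<le> f y"
      using main[of y] by (meson ereal_less_eq(3) order_trans)
  qed
qed

lemma prox_exists:
  fixes f :: "'a::euclidean_space \<Rightarrow> ereal"
  assumes pr: "proper_fun f" and cl: "closed_fun f" and cv: "convex_fun f" and c: "c > 0"
  shows "\<exists>y. \<forall>z. f y + ereal (c / 2 * (norm (y - p))\<^sup>2) \<le> f z + ereal (c / 2 * (norm (z - p))\<^sup>2)"
proof -
  define h where "h z = f z + ereal (c / 2 * (norm (z - p))\<^sup>2)" for z
  obtain a k where ak: "k \<ge> 0" "\<And>y. ereal (a - k * norm y) \<le> f y"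
    using convex_lower_bound[OF pr cl cv] by blast
  obtain y1 where y1: "f y1 \<noteq> \<infinity>" using pr unfolding proper_fun_def by blast
  have ninf: "\<And>x. f x \<noteq> -\<infinity>" using pr unfolding proper_fun_def by blast
  obtain F1 where F1: "f y1 = ereal F1" using y1 ninf[of y1] by (cases "f y1") auto
  define r1 where "r1 = F1 + c / 2 * (norm (y1 - p))\<^sup>2"
  have hy1: "h y1 = ereal r1" unfolding h_def r1_def F1 by simp
  define e where "e = norm p"
  define D where "D = \<bar>k * e + r1 - a\<bar> + 1"
  define R where "R = max (norm y1) (e + max 1 (2 * (k + D) / c))"
  have far: "h y > ereal r1" if "norm y > R" for y
  proof -
    define u where "u = norm y - e"
    have u1: "u \<ge> 1" and u2: "u \<ge> 2 * (k + D) / c" using that unfolding R_def u_def by auto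
    have "norm (y - p) \<ge> u" unfolding u_def e_def by (rule norm_triangle_ineq2)
    then have sq: "(norm (y - p))\<^sup>2 \<ge> u\<^sup>2" using u1 by (simp add: power_mono)
    have D0: "D \<ge> 1" unfolding D_def by simp
    have "c / 2 * u \<ge> k + D" using u2 c by (simp add: field_simps)
    then have "c / 2 * u * u \<ge> (k + D) * u" using u1 by (simp add: mult_right_mono)
    moreover have "(k + D) * u \<ge> k * u + D" using u1 D0 ak(1)
      by (simp add: algebra_simps)
    ultimately have "c / 2 * u\<^sup>2 \<ge> k * u + D" by (simp add: power2_eq_square algebra_simps)
    then have "c / 2 * (norm (y - p))\<^sup>2 \<ge> k * u + D" using sq c
      by (smt (verit, best) mult_left_mono half_gt_zero)
    moreover have eqkD: "k * u + D = k * norm y - k * e + \<bar>k * e + r1 - a\<bar> + 1"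
      unfolding u_def D_def by (simp add: algebra_simps)
    ultimately have "a - k * norm y + c / 2 * (norm (y - p))\<^sup>2 > r1"
      using abs_ge_self[of "k * e + r1 - a"] eqkD by linarith
    then have "ereal r1 < ereal (a - k * norm y) + ereal (c / 2 * (norm (y - p))\<^sup>2)" by simp
    also have "\<dots> \<le> h y" unfolding h_def by (intro add_right_mono ak(2))
    finally show ?thesis .
  qed
  have clh: "\<And>r. closed {y. h y \<le> ereal r}" unfolding h_def
    by (rule closed_sublevel_q[OF cl]) (intro continuous_intros)
  obtain ys where ys: "ys \<in> cball 0 R" "\<And>z. z \<in> cball 0 R \<Longrightarrow> h ys \<le> h z"
    using lsc_min_compact[of "cball 0 R" h, OF compact_cball _ clh] R_def
    by (metis cball_eq_empty linorder_not_le max.cobounded1 norm_ge_zero order_less_le_trans)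
  have "y1 \<in> cball 0 R" unfolding R_def by simp
  have "h ys \<le> h z" for z
  proof (cases "z \<in> cball 0 R")
    case True then show ?thesis using ys by simp
  next
    case False
    then have "h z > ereal r1" using far by simp
    then show ?thesis using ys(2)[OF \<open>y1 \<in> cball 0 R\<close>] hy1 by simp
  qed
  then show ?thesis unfolding h_def by blast
qed

lemma prox_opt:
  fixes f :: "'a::euclidean_space \<Rightarrow> ereal"
  assumes pr: "proper_fun f" and cv: "convex_fun f" and c: "c > 0"
    and mn: "\<And>z. f y + ereal (c / 2 * (norm (y - p))\<^sup>2) \<le> f z + ereal (c / 2 * (norm (z - p))\<^sup>2)"
  shows "\<bar>f y\<bar> \<noteq> \<infinity>" and "\<And>w. f y + ereal (c * ((p - y) \<bullet> (w - y))) \<le> f w"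
proof -
  obtain y1 where y1: "f y1 \<noteq> \<infinity>" using pr unfolding proper_fun_def by blast
  have ninf: "\<And>x. f x \<noteq> -\<infinity>" using pr unfolding proper_fun_def by blast
  have "f y \<noteq> \<infinity>" using mn[of y1] y1 ninf[of y1] by (cases "f y1"; cases "f y") auto
  then obtain F where F: "f y = ereal F" using ninf[of y] by (cases "f y") auto
  then show "\<bar>f y\<bar> \<noteq> \<infinity>" by simp
  fix w
  show "f y + ereal (c * ((p - y) \<bullet> (w - y))) \<le> f w"
  proof (cases "f w")
    case PInf then show ?thesis by simp
  next
    case MInf then show ?thesis using ninf by simp
  next
    case (real Fw)
    define G where "G = F - Fw + c * ((p - y) \<bullet> (w - y))"
    define n2 where "n2 = (w - y) \<bullet> (w - y)"
    have n20: "n2 \<ge> 0" unfolding n2_def by simp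
    have key: "G \<le> c / 2 * t * n2" if t: "0 < t" "t \<le> 1" for t
    proof -
      define yt where "yt = (1 - t) *\<^sub>R y + t *\<^sub>R w"
      have "f yt \<le> ereal (1 - t) * f y + ereal t * f w"
        using cv t unfolding convex_fun_def yt_def by simp
      then have fyt: "f yt \<le> ereal ((1 - t) * F + t * Fw)" using F real by simp
      have "ereal (F + c / 2 * (norm (y - p))\<^sup>2) \<le> f yt + ereal (c / 2 * (norm (yt - p))\<^sup>2)"
        using mn[of yt] F by simp
      also have "\<dots> \<le> ereal ((1 - t) * F + t * Fw) + ereal (c / 2 * (norm (yt - p))\<^sup>2)"
        by (intro add_right_mono fyt)
      finally have ineq: "F + c / 2 * (norm (y - p))\<^sup>2 \<le> (1 - t) * F + t * Fw + c / 2 * (norm (yt - p))\<^sup>2"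
        by simp
      have "yt - p = (y - p) + t *\<^sub>R (w - y)" unfolding yt_def by (simp add: algebra_simps)
      moreover have "(norm ((y - p) + t *\<^sub>R (w - y)))\<^sup>2 = (norm (y - p))\<^sup>2 + 2 * t * ((y - p) \<bullet> (w - y)) + t * t * n2"
        unfolding n2_def power2_norm_eq_inner by (simp add: inner_add_left inner_add_right inner_commute algebra_simps)
      ultimately have "(norm (yt - p))\<^sup>2 = (norm (y - p))\<^sup>2 + 2 * t * ((y - p) \<bullet> (w - y)) + t * t * n2"
        by metis
      with ineq have "t * F \<le> t * Fw + c * t * ((y - p) \<bullet> (w - y)) + c / 2 * t * t * n2"
        by (simp add: algebra_simps)
      then have "t * G \<le> t * (c / 2 * t * n2)"
        unfolding G_def by (simp add: algebra_simps inner_diff_left inner_diff_right)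
      then show ?thesis using t by simp
    qed
    have "G \<le> 0"
    proof (rule ccontr)
      assume "\<not> G \<le> 0"
      then have G0: "G > 0" by simp
      define t where "t = min 1 (G / (c * n2 + 1))"
      have cn: "c * n2 + 1 > 0" using c n20 by (simp add: add_nonneg_pos)
      have t: "0 < t" "t \<le> 1" unfolding t_def using G0 cn by auto
      have "c / 2 * t * n2 \<le> c / 2 * (G / (c * n2 + 1)) * n2"
        using c n20 unfolding t_def by (intro mult_right_mono mult_left_mono) auto
      also have "\<dots> < G"
      proof -
        have "c * n2 < c * n2 + 1" by simp
        then have "c * n2 / (c * n2 + 1) < 1" using cn by simp
        define Q where "Q = G * (c * n2 / (c * n2 + 1))"
        have q1: "Q < G" unfolding Q_def using \<open>c * n2 / (c * n2 + 1) < 1\<close> G0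
          by (metis mult.right_neutral mult_strict_left_mono)
        have q2: "c / 2 * (G / (c * n2 + 1)) * n2 = Q / 2" unfolding Q_def
          by (simp add: field_simps)
        have q3: "Q \<ge> 0" unfolding Q_def using G0 c n20 cn by simp
        show ?thesis unfolding q2 using q1 q3 by linarith
      qed
      finally show False using key[OF t] by simp
    qed
    then show ?thesis using F real unfolding G_def by simp
  qed
qed

lemma gfun_val: "gfun L A z = (if \<forall>l<L. \<exists>c. \<forall>v\<in>A l. z l v = c then 0 else \<infinity>)"
proof (cases "\<forall>l<L. \<exists>c. \<forall>v\<in>A l. z l v = c")
  case True then show ?thesis unfolding gfun_def by (intro trans[OF sum.neutral]) auto
next
  case False then show ?thesis unfolding gfun_def by (auto simp: sum_Pinfty)
qed

lemma gconj_zero: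
  fixes lam :: "nat \<Rightarrow> 'v \<Rightarrow> 'x::euclidean_space"
  assumes "\<forall>l<L. (\<Sum>v\<in>A l. lam l v) = 0"
  shows "fconj (ZS L A) (ipZ L A) (gfun L A) lam = 0"
  unfolding fconj_def
proof (rule antisym)
  show "(SUP x\<in>ZS L A. ereal (ipZ L A lam x) - gfun L A x) \<le> 0"
  proof (rule SUP_least)
    fix z :: "nat \<Rightarrow> 'v \<Rightarrow> 'x" assume "z \<in> ZS L A"
    show "ereal (ipZ L A lam z) - gfun L A z \<le> 0"
    proof (cases "\<forall>l<L. \<exists>c. \<forall>v\<in>A l. z l v = c")
      case True
      then have "\<forall>l. \<exists>c. l < L \<longrightarrow> (\<forall>v\<in>A l. z l v = c)" by blast
      from choice[OF this] obtain c where c0: "\<forall>l. l < L \<longrightarrow> (\<forall>v\<in>A l. z l v = c l)" by blast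
      then have c: "\<And>l v. l < L \<Longrightarrow> v \<in> A l \<Longrightarrow> z l v = c l" by blast
      have "ipZ L A lam z = (\<Sum>l<L. (\<Sum>v\<in>A l. lam l v) \<bullet> c l)"
        unfolding ipZ_def inner_sum_left by (intro sum.cong refl) (simp add: c)
      also have "\<dots> = 0" using assms by simp
      finally show ?thesis using True by (simp add: gfun_val)
    next
      case False
      have "gfun L A z = \<infinity>" unfolding gfun_val using False by (rule if_not_P)
      then show ?thesis by simp
    qed
  qed
  have z0: "(0::nat \<Rightarrow> 'v \<Rightarrow> 'x) \<in> ZS L A" unfolding ZS_def by simp
  have e0: "ereal (ipZ L A lam 0) - gfun L A (0::nat \<Rightarrow> 'v \<Rightarrow> 'x) = 0"
  proof -
    have "ipZ L A lam 0 = 0" unfolding ipZ_def by simp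
    moreover have "gfun L A (0::nat \<Rightarrow> 'v \<Rightarrow> 'x) = 0" unfolding gfun_val by simp
    ultimately show ?thesis by simp
  qed
  show "0 \<le> (SUP x\<in>ZS L A. ereal (ipZ L A lam x) - gfun L A x)"
    by (rule SUP_upper2[OF z0]) (simp add: e0)
qed

lemma gconj_inf:
  assumes l: "l < L" and fin: "finite (A l)" and s: "(\<Sum>v\<in>A l. lam l v) \<noteq> 0"
  shows "fconj (ZS L A) (ipZ L A) (gfun L A) (lam :: nat \<Rightarrow> 'v \<Rightarrow> 'x::euclidean_space) = \<infinity>"
  unfolding fconj_def
proof (rule ereal_top)
  fix B
  define s where "s = (\<Sum>v\<in>A l. lam l v)"
  have ss: "s \<bullet> s > 0" using assms s_def by simp
  define t where "t = B / (s \<bullet> s)"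
  define z where "z = (\<lambda>l' v. if l' = l \<and> v \<in> A l then t *\<^sub>R s else (0::'x))"
  have zZ: "z \<in> ZS L A" unfolding ZS_def z_def using l by auto
  have "\<forall>l'<L. \<exists>c. \<forall>v\<in>A l'. z l' v = c"
  proof (intro allI impI)
    fix l' show "\<exists>c. \<forall>v\<in>A l'. z l' v = c"
      by (rule exI[of _ "if l' = l then t *\<^sub>R s else 0"]) (simp add: z_def)
  qed
  then have gz: "gfun L A z = 0" unfolding gfun_val by simp
  have "ipZ L A lam z = (\<Sum>l'<L. if l' = l then (\<Sum>v\<in>A l. lam l v \<bullet> (t *\<^sub>R s)) else 0)"
    unfolding ipZ_def
  proof (intro sum.cong refl)
    fix l' show "(\<Sum>v\<in>A l'. lam l' v \<bullet> z l' v) = (if l' = l then (\<Sum>v\<in>A l. lam l v \<bullet> (t *\<^sub>R s)) else 0)"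
      by (cases "l' = l") (simp_all add: z_def)
  qed
  also have "\<dots> = (\<Sum>v\<in>A l. lam l v \<bullet> (t *\<^sub>R s))" using l by simp
  also have "\<dots> = (\<Sum>v\<in>A l. lam l v) \<bullet> (t *\<^sub>R s)" by (rule inner_sum_left[symmetric])
  also have "\<dots> = t * (s \<bullet> s)" unfolding s_def[symmetric] by simp
  also have "\<dots> = B" unfolding t_def using ss by simp
  finally have E: "ereal (ipZ L A lam z) - gfun L A z = ereal B" using gz by simp
  show "ereal B \<le> (SUP x\<in>ZS L A. ereal (ipZ L A lam x) - gfun L A x)"
    by (rule SUP_upper2[OF zZ]) (simp add: E)
qed

lemma ipZ_diff: "ipZ L A z (w - u) = ipZ L A z w - ipZ L A z u"
  unfolding ipZ_def by (simp add: inner_diff_right sum_subtractf)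

lemma part1_iff:
  fixes \<zeta> :: "nat \<Rightarrow> 'v \<Rightarrow> 'x::euclidean_space"
  assumes finA: "\<And>l. l < L \<Longrightarrow> finite (A l)" and neA: "\<And>l. l < L \<Longrightarrow> A l \<noteq> {}"
    and rho: "\<rho> > 0" and zeta: "\<zeta> \<in> ZS L A"
    and zbar_def: "zbar = (\<lambda>l. (1 / real (card (A l))) *\<^sub>R (\<Sum>v\<in>A l. \<zeta> l v))"
    and lam0_def: "lam0 = (\<lambda>l v. if l < L \<and> v \<in> A l then \<zeta> l v - zbar l else 0)"
    and z0_def: "z0 = (\<lambda>l v. if l < L \<and> v \<in> A l then (1 / \<rho>) *\<^sub>R zbar l else 0)"
  shows "(lam \<in> ZS L A \<and> z \<in> ZS L A \<and>
            z \<in> subdiff (ZS L A) (ipZ L A) (fconj (ZS L A) (ipZ L A) (gfun L A)) lam \<and>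
            (\<lambda>l v. lam l v + \<rho> *\<^sub>R z l v) = \<zeta>) \<longleftrightarrow> (lam = lam0 \<and> z = z0)"
proof -
  let ?G = "fconj (ZS L A) (ipZ L A) (gfun L A)"
  have cardpos: "l < L \<Longrightarrow> real (card (A l)) > 0" for l using finA neA by (simp add: card_gt_0_iff)
  have sumzeta: "l < L \<Longrightarrow> real (card (A l)) *\<^sub>R zbar l = (\<Sum>v\<in>A l. \<zeta> l v)" for l
    using cardpos[of l] unfolding zbar_def by simp
  have zeta0: "\<not> (l < L \<and> v \<in> A l) \<Longrightarrow> \<zeta> l v = 0" for l v using zeta unfolding ZS_def by auto
  have bs0: "\<forall>l<L. (\<Sum>v\<in>A l. lam0 l v) = 0"
  proof (intro allI impI)
    fix l assume l: "l < L"
    have "(\<Sum>v\<in>A l. lam0 l v) = (\<Sum>v\<in>A l. \<zeta> l v - zbar l)" unfolding lam0_def using l by simp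
    also have "\<dots> = (\<Sum>v\<in>A l. \<zeta> l v) - real (card (A l)) *\<^sub>R zbar l" by (simp add: sum_subtractf sum_constant_scaleR)
    also have "\<dots> = 0" using sumzeta[OF l] by simp
    finally show "(\<Sum>v\<in>A l. lam0 l v) = 0" .
  qed
  have lam0Z: "lam0 \<in> ZS L A" unfolding ZS_def lam0_def by auto
  have z0Z: "z0 \<in> ZS L A" unfolding ZS_def z0_def by auto
  have Glam0: "?G lam0 = 0" by (rule gconj_zero[OF bs0])
  have Gw: "?G w = (if \<forall>l<L. (\<Sum>v\<in>A l. w l v) = 0 then 0 else \<infinity>)" for w :: "nat \<Rightarrow> 'v \<Rightarrow> 'x"
  proof (cases "\<forall>l<L. (\<Sum>v\<in>A l. w l v) = 0")
    case True then show ?thesis using gconj_zero[OF True] by simp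
  next
    case False
    then obtain l where "l < L" "(\<Sum>v\<in>A l. w l v) \<noteq> 0" by blast
    then show ?thesis using gconj_inf[of l L A w] finA False by simp
  qed
  show ?thesis
  proof
    assume H: "lam \<in> ZS L A \<and> z \<in> ZS L A \<and> z \<in> subdiff (ZS L A) (ipZ L A) ?G lam \<and>
            (\<lambda>l v. lam l v + \<rho> *\<^sub>R z l v) = \<zeta>"
    then have lamZ: "lam \<in> ZS L A" and zZ: "z \<in> ZS L A" and sd: "z \<in> subdiff (ZS L A) (ipZ L A) ?G lam"
      and eq: "(\<lambda>l v. lam l v + \<rho> *\<^sub>R z l v) = \<zeta>" by auto
    have fin: "\<bar>?G lam\<bar> \<noteq> \<infinity>" and sub: "\<And>w. w \<in> ZS L A \<Longrightarrow> ?G lam + ereal (ipZ L A z (w - lam)) \<le> ?G w"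
      using sd unfolding subdiff_def by auto
    have eqp: "lam l v + \<rho> *\<^sub>R z l v = \<zeta> l v" for l v using fun_cong[OF fun_cong[OF eq, of l], of v] by simp
    have bs: "\<forall>l<L. (\<Sum>v\<in>A l. lam l v) = 0"
    proof (rule ccontr)
      assume "\<not> ?thesis"
      then have "?G lam = \<infinity>" using Gw[of lam] by simp
      then show False using fin by simp
    qed
    have Glam: "?G lam = 0" using Gw[of lam] bs by simp
    have const: "z l v = z l w" if l: "l < L" and v: "v \<in> A l" and w: "w \<in> A l" for l v w
    proof (rule ccontr)
      assume ne: "z l v \<noteq> z l w"
      then have vw: "v \<noteq> w" by auto
      define d where "d = z l v - z l w"
      have d0: "d \<bullet> d > 0" using ne d_def by simp
      define e where "e = (\<lambda>l' v'. (if l' = l \<and> v' = v then d else 0) - (if l' = l \<and> v' = w then d else (0::'x)))"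
      define w' where "w' = (\<lambda>l' v'. lam l' v' + e l' v')"
      have ediff: "w' - lam = e" unfolding w'_def by (rule ext)+ simp
      have w'Z: "w' \<in> ZS L A" using lamZ l v w unfolding ZS_def w'_def e_def by auto
      have esum: "(\<Sum>u\<in>A l'. e l' u) = 0" for l'
      proof (cases "l' = l")
        case True
        have "(\<Sum>u\<in>A l'. e l' u) = (\<Sum>u\<in>A l. if u = v then d else 0) - (\<Sum>u\<in>A l. if u = w then d else 0)"
          unfolding e_def True by (simp add: sum_subtractf)
        also have "\<dots> = 0" using v w finA[OF l] by simp
        finally show ?thesis .
      next
        case False then show ?thesis unfolding e_def by simp
      qed
      have "\<forall>l'<L. (\<Sum>u\<in>A l'. w' l' u) = 0"
        using bs esum unfolding w'_def by (simp add: sum.distrib)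
      then have Gw': "?G w' = 0" using Gw[of w'] by simp
      have ie: "ipZ L A z e = d \<bullet> d"
      proof -
        have "ipZ L A z e = (\<Sum>l'<L. if l' = l then z l v \<bullet> d - z l w \<bullet> d else 0)"
          unfolding ipZ_def
        proof (intro sum.cong refl)
          fix l' assume "l' \<in> {..<L}"
          show "(\<Sum>u\<in>A l'. z l' u \<bullet> e l' u) = (if l' = l then z l v \<bullet> d - z l w \<bullet> d else 0)"
          proof (cases "l' = l")
            case True
            have "(\<Sum>u\<in>A l'. z l' u \<bullet> e l' u) = (\<Sum>u\<in>A l. if u = v then z l u \<bullet> d else 0) - (\<Sum>u\<in>A l. if u = w then z l u \<bullet> d else 0)"
              unfolding e_def True by (simp add: inner_diff_right sum_subtractf if_distrib[of "inner _"] cong: if_cong)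
            also have "\<dots> = z l v \<bullet> d - z l w \<bullet> d" using v w finA[OF l] by simp
            finally show ?thesis using True by simp
          next
            case False then show ?thesis unfolding e_def by simp
          qed
        qed
        also have "\<dots> = z l v \<bullet> d - z l w \<bullet> d" using l by simp
        also have "\<dots> = d \<bullet> d" unfolding d_def by (simp add: inner_diff_left)
        finally show ?thesis .
      qed
      have "?G lam + ereal (ipZ L A z (w' - lam)) \<le> ?G w'" by (rule sub[OF w'Z])
      then have "d \<bullet> d \<le> 0" unfolding ediff ie Glam Gw' by simp
      then show False using d0 by simp
    qed
    have zval: "z l v = (1 / \<rho>) *\<^sub>R zbar l" if l: "l < L" and v: "v \<in> A l" for l v
    proof -
      have "(\<Sum>u\<in>A l. lam l u) = (\<Sum>u\<in>A l. \<zeta> l u - \<rho> *\<^sub>R z l v)"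
      proof (rule sum.cong[OF refl])
        fix u assume "u \<in> A l"
        then show "lam l u = \<zeta> l u - \<rho> *\<^sub>R z l v" using eqp[of l u] const[OF l v, of u] by (simp add: algebra_simps)
      qed
      also have "\<dots> = real (card (A l)) *\<^sub>R zbar l - real (card (A l)) *\<^sub>R (\<rho> *\<^sub>R z l v)"
        using sumzeta[OF l] by (simp add: sum_subtractf sum_constant_scaleR)
      finally have "real (card (A l)) *\<^sub>R (zbar l - \<rho> *\<^sub>R z l v) = 0"
        using bs l by (simp add: scaleR_diff_right)
      then have "zbar l = \<rho> *\<^sub>R z l v" using cardpos[OF l] by simp
      then show ?thesis using rho by simp
    qed
    have "z = z0"
    proof (intro ext)
      fix l v show "z l v = z0 l v"
        using zval[of l v] zZ unfolding z0_def ZS_def by auto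
    qed
    moreover have "lam = lam0"
    proof (intro ext)
      fix l v show "lam l v = lam0 l v"
      proof (cases "l < L \<and> v \<in> A l")
        case True
        then show ?thesis using eqp[of l v] zval[of l v] rho unfolding lam0_def by (simp add: algebra_simps)
      next
        case False then show ?thesis using lamZ unfolding lam0_def ZS_def by auto
      qed
    qed
    ultimately show "lam = lam0 \<and> z = z0" by simp
  next
    assume "lam = lam0 \<and> z = z0"
    then have lz: "lam = lam0" "z = z0" by auto
    have sd: "z0 \<in> subdiff (ZS L A) (ipZ L A) ?G lam0"
      unfolding subdiff_def
    proof (intro CollectI conjI ballI z0Z lam0Z)
      show "\<bar>?G lam0\<bar> \<noteq> \<infinity>" using Glam0 by simp
      fix w :: "nat \<Rightarrow> 'v \<Rightarrow> 'x" assume wZ: "w \<in> ZS L A"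
      show "?G lam0 + ereal (ipZ L A z0 (w - lam0)) \<le> ?G w"
      proof (cases "\<forall>l<L. (\<Sum>v\<in>A l. w l v) = 0")
        case True
        have "ipZ L A z0 (w - lam0) = (\<Sum>l<L. ((1 / \<rho>) *\<^sub>R zbar l) \<bullet> ((\<Sum>v\<in>A l. w l v) - (\<Sum>v\<in>A l. lam0 l v)))"
          unfolding ipZ_def
        proof (intro sum.cong refl)
          fix l assume "l \<in> {..<L}"
          then show "(\<Sum>v\<in>A l. z0 l v \<bullet> (w - lam0) l v) = ((1 / \<rho>) *\<^sub>R zbar l) \<bullet> ((\<Sum>v\<in>A l. w l v) - (\<Sum>v\<in>A l. lam0 l v))"
            unfolding z0_def by (simp add: inner_sum_right sum_subtractf inner_diff_right)
        qed
        also have "\<dots> = 0" using True bs0 by simp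
        finally show ?thesis using Glam0 Gw[of w] True by simp
      next
        case False
        have "?G w = \<infinity>" unfolding Gw[of w] using False by (rule if_not_P)
        then show ?thesis by simp
      qed
    qed
    have eq: "(\<lambda>l v. lam0 l v + \<rho> *\<^sub>R z0 l v) = \<zeta>"
    proof (intro ext)
      fix l v show "lam0 l v + \<rho> *\<^sub>R z0 l v = \<zeta> l v"
        using rho zeta0[of l v] unfolding lam0_def z0_def by auto
    qed
    show "lam \<in> ZS L A \<and> z \<in> ZS L A \<and> z \<in> subdiff (ZS L A) (ipZ L A) ?G lam \<and>
            (\<lambda>l v. lam l v + \<rho> *\<^sub>R z l v) = \<zeta>"
      unfolding lz using lam0Z z0Z sd eq by simp
  qed
qed

lemma prox_is_min:
  fixes f :: "'a::euclidean_space \<Rightarrow> ereal"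
  assumes "proper_fun f" "closed_fun f" "convex_fun f" "c > 0"
  shows "\<And>z. f (prox f c p) + ereal (c / 2 * (norm (prox f c p - p))\<^sup>2) \<le> f z + ereal (c / 2 * (norm (z - p))\<^sup>2)"
proof -
  fix z
  define h where "h y = f y + ereal (c / 2 * (norm (y - p))\<^sup>2)" for y
  obtain y where y: "\<forall>z. h y \<le> h z" using prox_exists[OF assms, of p] unfolding h_def by blast
  have "is_arg_min h (\<lambda>_. True) y" unfolding is_arg_min_def using y by (simp add: not_less)
  then have "is_arg_min h (\<lambda>_. True) (arg_min h (\<lambda>_. True))"
    unfolding arg_min_def by (rule someI)
  then have "h (prox f c p) \<le> h z" unfolding prox_def h_def[abs_def] is_arg_min_def by (simp add: not_less)
  then show "f (prox f c p) + ereal (c / 2 * (norm (prox f c p - p))\<^sup>2) \<le> f z + ereal (c / 2 * (norm (z - p))\<^sup>2)"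
    unfolding h_def .
qed

lemma main_assembly:
  fixes V :: "'v set" and fv :: "'v \<Rightarrow> 'x::euclidean_space \<Rightarrow> ereal"
    and L :: nat and A :: "nat \<Rightarrow> 'v set" and \<rho> :: real and \<zeta> :: "nat \<Rightarrow> 'v \<Rightarrow> 'x"
  assumes finV: "finite V"
    and fv_pcc: "\<forall>v\<in>V. proper_fun (fv v) \<and> closed_fun (fv v) \<and> convex_fun (fv v)"
    and A_sub: "\<forall>l<L. A l \<subseteq> V \<and> A l \<noteq> {}"
    and A_cover: "(\<Union>l<L. A l) = V"
    and rho_pos: "\<rho> > 0"
    and zeta_in: "\<zeta> \<in> ZS L A"
    and zbar_def: "zbar = (\<lambda>l. (1 / real (card (A l))) *\<^sub>R (\<Sum>v\<in>A l. \<zeta> l v))"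
    and lam0_def: "lam0 = (\<lambda>l v. if l < L \<and> v \<in> A l then \<zeta> l v - zbar l else 0)"
    and z0_def: "z0 = (\<lambda>l v. if l < L \<and> v \<in> A l then (1 / \<rho>) *\<^sub>R zbar l else 0)"
    and x0_def: "x0 = (\<lambda>v. prox (fv v) (\<rho> * real (card (sigma_idx L A v)))
                ((1 / real (card (sigma_idx L A v))) *\<^sub>R
                  (\<Sum>m\<in>sigma_idx L A v. (1 / \<rho>) *\<^sub>R zbar m - (1 / \<rho>) *\<^sub>R lam0 m v)))"
    and s0_def: "s0 = (\<lambda>l v. if l < L \<and> v \<in> A l then lam0 l v + \<rho> *\<^sub>R x0 v else 0)"
  shows "{(lam, z). lam \<in> ZS L A \<and> z \<in> ZS L A \<and>
            z \<in> subdiff (ZS L A) (ipZ L A) (fconj (ZS L A) (ipZ L A) (gfun L A)) lam \<and>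
            (\<lambda>l v. lam l v + \<rho> *\<^sub>R z l v) = \<zeta>} = {(lam0, z0)}
      \<and> {\<mu>. (\<zeta>, \<mu>) \<in> resolventZ \<rho> (Uop L A)} = {lam0}
      \<and> {s. (\<zeta>, s) \<in> resolventZ 1 (DRop \<rho> (Top V L A fv) (Uop L A))} = {s0}"
proof -
  let ?G = "fconj (ZS L A) (ipZ L A) (gfun L A)"
  have finA: "\<And>l. l < L \<Longrightarrow> finite (A l)" using A_sub finV finite_subset by blast
  have neA: "\<And>l. l < L \<Longrightarrow> A l \<noteq> {}" using A_sub by blast
  note P1 = part1_iff[OF finA neA rho_pos zeta_in zbar_def lam0_def z0_def]
  have S1: "{(lam, z). lam \<in> ZS L A \<and> z \<in> ZS L A \<and>
            z \<in> subdiff (ZS L A) (ipZ L A) ?G lam \<and>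
            (\<lambda>l v. lam l v + \<rho> *\<^sub>R z l v) = \<zeta>} = {(lam0, z0)}"
    using P1 by auto
  have P1': "(\<mu>, b) \<in> Uop L A \<and> (\<lambda>l v. \<mu> l v + \<rho> *\<^sub>R b l v) = \<zeta> \<longleftrightarrow> \<mu> = lam0 \<and> b = z0" for \<mu> b
    using P1[of \<mu> b] unfolding Uop_def subdiff_def by auto
  have S2: "{\<mu>. (\<zeta>, \<mu>) \<in> resolventZ \<rho> (Uop L A)} = {lam0}"
  proof -
    have "(\<zeta>, \<mu>) \<in> resolventZ \<rho> (Uop L A) \<longleftrightarrow> (\<exists>b. (\<mu>, b) \<in> Uop L A \<and> (\<lambda>l v. \<mu> l v + \<rho> *\<^sub>R b l v) = \<zeta>)" for \<mu>
      unfolding resolventZ_def by auto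
    then show ?thesis using P1' by auto
  qed
  define \<sigma> where "\<sigma> v = sigma_idx L A v" for v
  have sig_fin: "finite (\<sigma> v)" for v unfolding \<sigma>_def sigma_idx_def by simp
  have sig_mem: "l \<in> \<sigma> v \<longleftrightarrow> l < L \<and> v \<in> A l" for l v unfolding \<sigma>_def sigma_idx_def by simp
  have sig_card: "v \<in> V \<Longrightarrow> real (card (\<sigma> v)) > 0" for v
  proof -
    assume "v \<in> V"
    then obtain l where "l < L" "v \<in> A l" using A_cover by blast
    then have "\<sigma> v \<noteq> {}" using sig_mem by blast
    then show ?thesis using sig_fin by (simp add: card_gt_0_iff)
  qed
  define n where "n v = real (card (\<sigma> v))" for v
  define p where "p v = (1 / n v) *\<^sub>R (\<Sum>m\<in>\<sigma> v. (1 / \<rho>) *\<^sub>R zbar m - (1 / \<rho>) *\<^sub>R lam0 m v)" for v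
  have x0p: "x0 v = prox (fv v) (\<rho> * n v) (p v)" for v unfolding x0_def p_def n_def \<sigma>_def by simp
  define xs where "xs v = (if v \<in> V then x0 v else 0)" for v
  have xsX: "xs \<in> XV V" unfolding XV_def xs_def by simp
  define nuf where "nuf x = (\<lambda>l v. lam0 l v - \<rho> *\<^sub>R z0 l v + \<rho> *\<^sub>R Mop L A x l v)" for x :: "'v \<Rightarrow> 'x"
  have nufZ: "nuf x \<in> ZS L A" for x unfolding ZS_def nuf_def lam0_def z0_def Mop_def by auto
  have Madj_nuf: "Madj V L A (nuf x) v = (\<Sum>l\<in>\<sigma> v. lam0 l v - \<rho> *\<^sub>R z0 l v) + (\<rho> * n v) *\<^sub>R x v"
    if v: "v \<in> V" for x v
  proof -
    have "Madj V L A (nuf x) v = (\<Sum>l\<in>\<sigma> v. (lam0 l v - \<rho> *\<^sub>R z0 l v) + \<rho> *\<^sub>R x v)"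
      using v unfolding Madj_def \<sigma>_def[symmetric] nuf_def Mop_def
      by (simp, intro sum.cong refl) (auto simp: sig_mem)
    also have "\<dots> = (\<Sum>l\<in>\<sigma> v. lam0 l v - \<rho> *\<^sub>R z0 l v) + (\<rho> * n v) *\<^sub>R x v"
      by (simp add: sum.distrib sum_constant_scaleR n_def)
    finally show ?thesis .
  qed
  have sum_p: "(\<Sum>l\<in>\<sigma> v. lam0 l v - \<rho> *\<^sub>R z0 l v) = - ((\<rho> * n v) *\<^sub>R p v)" if v: "v \<in> V" for v
  proof -
    have "(\<rho> * n v) *\<^sub>R p v = (\<Sum>m\<in>\<sigma> v. \<rho> *\<^sub>R ((1 / \<rho>) *\<^sub>R zbar m - (1 / \<rho>) *\<^sub>R lam0 m v))"
      unfolding p_def using sig_card[OF v] n_def by (simp add: scaleR_sum_right)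
    also have "\<dots> = (\<Sum>m\<in>\<sigma> v. zbar m - lam0 m v)"
      using rho_pos by (simp add: scaleR_diff_right)
    also have "\<dots> = - (\<Sum>l\<in>\<sigma> v. lam0 l v - \<rho> *\<^sub>R z0 l v)"
      unfolding sum_negf[symmetric] using rho_pos
      by (intro sum.cong refl) (simp add: z0_def sig_mem)
    finally show ?thesis by simp
  qed
  define u0 where "u0 = - Madj V L A (nuf xs)"
  have u0v: "u0 v = (\<rho> * n v) *\<^sub>R (p v - xs v)" if v: "v \<in> V" for v
    unfolding u0_def using Madj_nuf[OF v, of xs] sum_p[OF v] by (simp add: scaleR_diff_right)
  have u0X: "u0 \<in> XV V" unfolding XV_def u0_def Madj_def by simp
  have opt: "fv v (xs v) + ereal (u0 v \<bullet> (w - xs v)) \<le> fv v w" and finv: "\<bar>fv v (xs v)\<bar> \<noteq> \<infinity>"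
    if v: "v \<in> V" for v w
  proof -
    have pcc: "proper_fun (fv v)" "closed_fun (fv v)" "convex_fun (fv v)" using fv_pcc v by auto
    have c: "\<rho> * n v > 0" using rho_pos sig_card[OF v] n_def by simp
    have xv: "xs v = prox (fv v) (\<rho> * n v) (p v)" using v x0p xs_def by simp
    note mn = prox_is_min[OF pcc c, of "p v", folded xv]
    show "\<bar>fv v (xs v)\<bar> \<noteq> \<infinity>" by (rule prox_opt(1)[OF pcc(1) pcc(3) c mn])
    have "fv v (xs v) + ereal ((\<rho> * n v) * ((p v - xs v) \<bullet> (w - xs v))) \<le> fv v w"
      by (rule prox_opt(2)[OF pcc(1) pcc(3) c mn])
    then show "fv v (xs v) + ereal (u0 v \<bullet> (w - xs v)) \<le> fv v w" using u0v[OF v] by simp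
  qed
  define F where "F = fsum V fv"
  define Fs where "Fs = fconj (XV V) (ipV V) F"
  define a where "a = (\<Sum>v\<in>V. real_of_ereal (fv v (xs v)))"
  have Fxs: "F xs = ereal a"
  proof -
    have "F xs = (\<Sum>v\<in>V. ereal (real_of_ereal (fv v (xs v))))"
      unfolding F_def fsum_def using finv by (intro sum.cong refl) (simp add: ereal_real)
    then show ?thesis unfolding a_def by (simp add: sum_ereal)
  qed
  have ipV_diff: "ipV V x (y - z) = ipV V x y - ipV V x z" for x y z :: "'v \<Rightarrow> 'x"
    unfolding ipV_def by (simp add: inner_diff_right sum_subtractf)
  have ipV_comm: "ipV V x y = ipV V y x" for x y :: "'v \<Rightarrow> 'x"
    unfolding ipV_def by (simp add: inner_commute)
  have young: "ereal (ipV V u0 y) - F y \<le> ereal (ipV V u0 xs - a)" for y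
  proof -
    have "(\<Sum>v\<in>V. fv v (xs v) + ereal (u0 v \<bullet> (y v - xs v))) \<le> (\<Sum>v\<in>V. fv v (y v))"
      by (rule sum_mono) (rule opt)
    moreover have "(\<Sum>v\<in>V. fv v (xs v) + ereal (u0 v \<bullet> (y v - xs v))) = F xs + ereal (ipV V u0 y - ipV V u0 xs)"
      unfolding F_def fsum_def ipV_def
      by (simp add: sum.distrib sum_ereal inner_diff_right sum_subtractf)
    ultimately have "ereal a + ereal (ipV V u0 y - ipV V u0 xs) \<le> F y" using Fxs[unfolded F_def fsum_def] unfolding F_def fsum_def by simp
    then show ?thesis by (cases "F y") auto
  qed
  have Fs_u0: "Fs u0 = ereal (ipV V u0 xs - a)"
  proof (rule antisym)
    show "Fs u0 \<le> ereal (ipV V u0 xs - a)" unfolding Fs_def fconj_def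
      by (rule SUP_least) (rule young)
    have "ereal (ipV V u0 xs - a) = ereal (ipV V u0 xs) - F xs" using Fxs by simp
    also have "\<dots> \<le> Fs u0" unfolding Fs_def fconj_def by (rule SUP_upper[OF xsX])
    finally show "ereal (ipV V u0 xs - a) \<le> Fs u0" .
  qed
  have Fs_lower: "ereal (ipV V w xs - a) \<le> Fs w" for w
  proof -
    have "ereal (ipV V w xs - a) = ereal (ipV V w xs) - F xs" using Fxs by simp
    also have "\<dots> \<le> Fs w" unfolding Fs_def fconj_def by (rule SUP_upper[OF xsX])
    finally show ?thesis .
  qed
  have xs_sd: "xs \<in> subdiff (XV V) (ipV V) Fs u0"
    unfolding subdiff_def
  proof (intro CollectI conjI ballI xsX u0X)
    show "\<bar>Fs u0\<bar> \<noteq> \<infinity>" using Fs_u0 by simp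
    fix w :: "'v \<Rightarrow> 'x" assume "w \<in> XV V"
    have "Fs u0 + ereal (ipV V xs (w - u0)) = ereal (ipV V w xs - a)"
      unfolding Fs_u0 ipV_diff using ipV_comm[of xs w] ipV_comm[of xs u0] by simp
    then show "Fs u0 + ereal (ipV V xs (w - u0)) \<le> Fs w" using Fs_lower[of w] by simp
  qed
  have s0_eq: "(\<lambda>l v. nuf xs l v + \<rho> *\<^sub>R z0 l v) = s0"
  proof (intro ext)
    fix l v show "nuf xs l v + \<rho> *\<^sub>R z0 l v = s0 l v"
      using A_sub unfolding nuf_def s0_def Mop_def xs_def lam0_def z0_def by auto
  qed
  have zeta_eq: "(\<lambda>l v. lam0 l v + \<rho> *\<^sub>R z0 l v) = \<zeta>" using P1[of lam0 z0] by simp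
  have U0: "(lam0, z0) \<in> Uop L A" using P1'[of lam0 z0] zeta_eq by simp
  have T0: "(nuf xs, - Mop L A xs) \<in> Top V L A fv"
    unfolding Top_def using nufZ[of xs] xs_sd unfolding Fs_def F_def u0_def by blast
  have S3a: "(\<zeta>, s0) \<in> resolventZ 1 (DRop \<rho> (Top V L A fv) (Uop L A))"
  proof -
    have con: "(\<lambda>l v. nuf xs l v + \<rho> *\<^sub>R (- Mop L A xs) l v) = (\<lambda>l v. lam0 l v - \<rho> *\<^sub>R z0 l v)"
      unfolding nuf_def by (intro ext) simp
    have "(s0, (\<lambda>l v. lam0 l v - nuf xs l v)) \<in> DRop \<rho> (Top V L A fv) (Uop L A)"
      unfolding DRop_def using U0 T0 con s0_eq by blast
    moreover have "\<zeta> = (\<lambda>l v. s0 l v + 1 *\<^sub>R (lam0 l v - nuf xs l v))"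
      unfolding s0_eq[symmetric] zeta_eq[symmetric] by (intro ext) simp
    ultimately show ?thesis unfolding resolventZ_def
      by (intro CollectI exI[of _ s0] exI[of _ "\<lambda>l v. lam0 l v - nuf xs l v"]) simp
  qed
  have S3b: "s = s0" if H: "(\<zeta>, s) \<in> resolventZ 1 (DRop \<rho> (Top V L A fv) (Uop L A))" for s
  proof -
    obtain y where sy: "(s, y) \<in> DRop \<rho> (Top V L A fv) (Uop L A)"
      and zs: "\<zeta> = (\<lambda>l v. s l v + 1 *\<^sub>R y l v)"
      using H unfolding resolventZ_def by blast
    obtain \<mu> b \<nu> x where s_def': "s = (\<lambda>l v. \<nu> l v + \<rho> *\<^sub>R b l v)" and y_def': "y = (\<lambda>l v. \<mu> l v - \<nu> l v)"
      and Ub: "(\<mu>, b) \<in> Uop L A" and \<nu>Z: "\<nu> \<in> ZS L A"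
      and xsd: "x \<in> subdiff (XV V) (ipV V) Fs (- Madj V L A \<nu>)"
      and con: "(\<lambda>l v. \<nu> l v + \<rho> *\<^sub>R (- Mop L A x) l v) = (\<lambda>l v. \<mu> l v - \<rho> *\<^sub>R b l v)"
      using sy unfolding DRop_def Top_def Fs_def F_def by blast
    have "(\<lambda>l v. \<mu> l v + \<rho> *\<^sub>R b l v) = \<zeta>"
      unfolding zs s_def' y_def' by (intro ext) simp
    then have mb: "\<mu> = lam0" "b = z0" using P1' Ub by auto
    have nu_eq: "\<nu> = nuf x"
    proof (intro ext)
      fix l v
      have "\<nu> l v - \<rho> *\<^sub>R Mop L A x l v = \<mu> l v - \<rho> *\<^sub>R b l v"
        using fun_cong[OF fun_cong[OF con, of l], of v] by simp
      then show "\<nu> l v = nuf x l v" unfolding nuf_def mb by (simp add: algebra_simps)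
    qed
    define u where "u = - Madj V L A \<nu>"
    have xX: "x \<in> XV V" and uX: "u \<in> XV V" and finu: "\<bar>Fs u\<bar> \<noteq> \<infinity>"
      and subx: "\<And>w. w \<in> XV V \<Longrightarrow> Fs u + ereal (ipV V x (w - u)) \<le> Fs w"
      using xsd unfolding subdiff_def u_def by auto
    have subxs: "\<And>w. w \<in> XV V \<Longrightarrow> Fs u0 + ereal (ipV V xs (w - u0)) \<le> Fs w"
      using xs_sd unfolding subdiff_def by auto
    obtain Fu where Fu: "Fs u = ereal Fu" using finu by (cases "Fs u") auto
    obtain Fu0 where Fu0: "Fs u0 = ereal Fu0" using Fs_u0 by simp
    have i1: "Fu + ipV V x (u0 - u) \<le> Fu0" using subx[OF u0X] Fu Fu0 by simp
    have i2: "Fu0 + ipV V xs (u - u0) \<le> Fu" using subxs[OF uX] Fu Fu0 by simp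
    have duv: "u0 v - u v = (\<rho> * n v) *\<^sub>R (x v - xs v)" if v: "v \<in> V" for v
      unfolding u0_def u_def nu_eq using Madj_nuf[OF v, of x] Madj_nuf[OF v, of xs]
      by (simp add: algebra_simps)
    have "ipV V (\<lambda>v. x v - xs v) (u0 - u) = ipV V x (u0 - u) + ipV V xs (u - u0)"
      unfolding ipV_def by (simp add: inner_diff_left inner_diff_right sum_subtractf sum.distrib algebra_simps)
    also have "\<dots> \<le> 0" using i1 i2 by simp
    finally have le0: "(\<Sum>v\<in>V. (\<rho> * n v) * ((x v - xs v) \<bullet> (x v - xs v))) \<le> 0"
      unfolding ipV_def using duv by (simp add: cong: sum.cong)
    have nonneg: "\<And>v. v \<in> V \<Longrightarrow> 0 \<le> (\<rho> * n v) * ((x v - xs v) \<bullet> (x v - xs v))"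
      using rho_pos sig_card n_def by simp
    have "(\<Sum>v\<in>V. (\<rho> * n v) * ((x v - xs v) \<bullet> (x v - xs v))) = 0"
    proof -
      have "0 \<le> (\<Sum>v\<in>V. (\<rho> * n v) * ((x v - xs v) \<bullet> (x v - xs v)))"
        by (rule sum_nonneg) (rule nonneg)
      then show ?thesis using le0 by linarith
    qed
    then have "\<forall>v\<in>V. (\<rho> * n v) * ((x v - xs v) \<bullet> (x v - xs v)) = 0"
      using sum_nonneg_eq_0_iff[OF finV, of "\<lambda>v. (\<rho> * n v) * ((x v - xs v) \<bullet> (x v - xs v))"] nonneg by blast
    then have Z0: "\<forall>v\<in>V. card (\<sigma> v) = 0 \<or> x v = xs v" using rho_pos n_def by simp
    have "x = xs"
    proof (intro ext)
      fix v show "x v = xs v"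
      proof (cases "v \<in> V")
        case True
        then have "card (\<sigma> v) \<noteq> 0" using sig_card[OF True] by simp
        moreover have "card (\<sigma> v) = 0 \<or> x v = xs v" using Z0 True by (rule bspec)
        ultimately show ?thesis by simp
      next
        case False then show ?thesis using xX xsX unfolding XV_def by simp
      qed
    qed
    then show "s = s0" unfolding s_def' nu_eq mb s0_eq[symmetric] by simp
  qed
  have S3: "{s. (\<zeta>, s) \<in> resolventZ 1 (DRop \<rho> (Top V L A fv) (Uop L A))} = {s0}"
    using S3a S3b by blast
  show ?thesis using S1 S2 S3 by simp
qed

theorem mainTheorem4:
  fixes V :: "'v set" and E :: "('v \<times> 'v) set"
    and fv :: "'v \<Rightarrow> 'x::euclidean_space \<Rightarrow> ereal"
    and L :: nat and A :: "nat \<Rightarrow> 'v set"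
    and \<rho> :: real and \<zeta> :: "nat \<Rightarrow> 'v \<Rightarrow> 'x"
  assumes finV: "finite V"
    and fv_pcc: "\<forall>v\<in>V. proper_fun (fv v) \<and> closed_fun (fv v) \<and> convex_fun (fv v)"
    and inf_attained: "\<exists>y0. \<bar>\<Sum>v\<in>V. fv v y0\<bar> \<noteq> \<infinity> \<and> (\<forall>y. (\<Sum>v\<in>V. fv v y0) \<le> (\<Sum>v\<in>V. fv v y))"
    and graph: "E \<subseteq> V \<times> V"
    and A_sub: "\<forall>l<L. A l \<subseteq> V \<and> A l \<noteq> {}"
    and A_cover: "(\<Union>l<L. A l) = V"
    and conn: "connected_graph V (union_induced_edges E L A)"
    and rho_pos: "\<rho> > 0"
    and zeta_in: "\<zeta> \<in> ZS L A"
  shows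
    "let zbar = (\<lambda>l. (1 / real (card (A l))) *\<^sub>R (\<Sum>v\<in>A l. \<zeta> l v));
         lam0 = (\<lambda>l v. if l < L \<and> v \<in> A l then \<zeta> l v - zbar l else 0);
         z0 = (\<lambda>l v. if l < L \<and> v \<in> A l then (1 / \<rho>) *\<^sub>R zbar l else 0);
         U = Uop L A;
         x0 = (\<lambda>v. prox (fv v) (\<rho> * real (card (sigma_idx L A v)))
                ((1 / real (card (sigma_idx L A v))) *\<^sub>R
                  (\<Sum>m\<in>sigma_idx L A v. (1 / \<rho>) *\<^sub>R zbar m - (1 / \<rho>) *\<^sub>R lam0 m v)));
         s0 = (\<lambda>l v. if l < L \<and> v \<in> A l then lam0 l v + \<rho> *\<^sub>R x0 v else 0)
     in {(lam, z). lam \<in> ZS L A \<and> z \<in> ZS L A \<and>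
            z \<in> subdiff (ZS L A) (ipZ L A) (fconj (ZS L A) (ipZ L A) (gfun L A)) lam \<and>
            (\<lambda>l v. lam l v + \<rho> *\<^sub>R z l v) = \<zeta>} = {(lam0, z0)}
      \<and> {\<mu>. (\<zeta>, \<mu>) \<in> resolventZ \<rho> U} = {lam0}
      \<and> {s. (\<zeta>, s) \<in> resolventZ 1 (DRop \<rho> (Top V L A fv) U)} = {s0}"
  unfolding Let_def
  by (rule main_assembly[OF finV fv_pcc A_sub A_cover rho_pos zeta_in refl refl refl refl refl])

end
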